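(* For real $\alpha,\beta$, the inequalities $M_{\alpha }\left( 1,\cos x;\tfrac{2}{3}\right) <\frac{\sin x}{x}<M_{\beta}\left( 1,\cos x;\tfrac{2}{3}\right)$ hold for all $x\in(0,\pi/2)$ if and only if $\alpha \leq 4/5$ and $\beta \geq \frac{\ln 3-\ln 2}{\ln \pi -\ln 2}$.
   Context: For $a,b>0$ and $w\in(0,1)$, the weighted power mean is $M_{r}(a,b;w)=\left( wa^{r}+(1-w) b^{r}\right)^{1/r}$ if $r\neq 0$ and $M_{0}(a,b;w)=a^{w}b^{1-w}$. *)

theory Defs
  imports "HOL-Analysis.Analysis"
begin

definition power_mean :: "real \<Rightarrow> real \<Rightarrow> real \<Rightarrow> real \<Rightarrow> real" where
  "power_mean r a b w =
     (if r = 0 then a powr w * b powr (1 - w)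
      else (w * a powr r + (1 - w) * b powr r) powr (1 / r))"

end

theory Submission
  imports Defs "HOL-Real_Asymp.Real_Asymp"
begin


section \<open>Reflective polynomial positivity checker\<close>

fun peval :: "int list \<Rightarrow> real \<Rightarrow> real" where
  "peval [] x = 0"
| "peval (c # cs) x = of_int c + x * peval cs x"

fun padd :: "int list \<Rightarrow> int list \<Rightarrow> int list" where
  "padd [] ys = ys"
| "padd xs [] = xs"
| "padd (x#xs) (y#ys) = (x+y) # padd xs ys"

fun pmul :: "int list \<Rightarrow> int list \<Rightarrow> int list" where
  "pmul [] ys = []"
| "pmul (x#xs) ys = padd (map ((*) x) ys) (0 # pmul xs ys)"

fun ppow :: "int list \<Rightarrow> nat \<Rightarrow> int list" where
  "ppow p 0 = [1]"
| "ppow p (Suc n) = pmul p (ppow p n)"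

fun scl :: "int \<Rightarrow> int \<Rightarrow> int list \<Rightarrow> int list" where
  "scl a b [] = []"
| "scl a b (c#cs) = (b^(Suc (length cs)) * c) # map ((*) a) (scl a b cs)"

fun shk :: "int \<Rightarrow> int list \<Rightarrow> int list" where
  "shk k [] = []"
| "shk k (c#cs) = (let r = shk k cs in padd [c] (padd (map ((*) k) r) (0#r)))"

definition sumneg :: "int list \<Rightarrow> int" where
  "sumneg cs = sum_list (map (\<lambda>c. max 0 (-c)) cs)"

fun chk :: "nat \<Rightarrow> int list \<Rightarrow> bool" where
  "chk n [] = False"
| "chk n (c#cs) = (sumneg cs < c \<or> (c = 0 \<and> chk n cs) \<or>
     (case n of 0 \<Rightarrow> False | Suc m \<Rightarrow> chk m (scl 1 2 (c#cs)) \<and> chk m (shk 1 (scl 1 2 (c#cs)))))"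

declare chk.simps[simp del]

lemma peval_padd[simp]: "peval (padd p q) x = peval p x + peval q x"
  by (induction p q rule: padd.induct) (auto simp: algebra_simps)

lemma peval_map_mult[simp]: "peval (map ((*) a) p) x = of_int a * peval p x"
  by (induction p) (auto simp: algebra_simps)

lemma peval_pmul[simp]: "peval (pmul p q) x = peval p x * peval q x"
  by (induction p) (auto simp: algebra_simps)

lemma peval_ppow[simp]: "peval (ppow p n) x = peval p x ^ n"
  by (induction n) auto

lemma peval_scl: "b \<noteq> 0 \<Longrightarrow> peval (scl a b p) t = of_int b ^ length p * peval p (of_int a * t / of_int b)"
  by (induction p) (auto simp: algebra_simps)

lemma peval_shk: "peval (shk k p) t = peval p (of_int k + t)"
  by (induction p) (auto simp: Let_def algebra_simps)

lemma sumneg_bound: "0 \<le> t \<Longrightarrow> t \<le> 1 \<Longrightarrow> - of_int (sumneg p) \<le> peval p t"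
proof (induction p)
  case Nil then show ?case by (simp add: sumneg_def)
next
  case (Cons c cs)
  have s0: "0 \<le> sumneg cs" unfolding sumneg_def by (induction cs) auto
  have "t * peval cs t \<ge> t * (- of_int (sumneg cs))"
    using Cons by (intro mult_left_mono) auto
  moreover have "t * (- of_int (sumneg cs)) \<ge> - of_int (sumneg cs)"
    using Cons s0 mult_left_le_one_le[of "of_int (sumneg cs)" t] by simp
  moreover have "(of_int c::real) \<ge> - of_int (max 0 (-c))" by (auto simp: max_def)
  ultimately show ?case by (simp add: sumneg_def)
qed

lemma chk_sound: "chk n p \<Longrightarrow> 0 < t \<Longrightarrow> t \<le> 1 \<Longrightarrow> 0 < peval p t"
proof (induction n p arbitrary: t rule: chk.induct)
  case (1 n) then show ?case by (simp add: chk.simps)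
next
  case (2 n c cs)
  show ?case
  proof (cases "sumneg cs < c")
    case True
    have "- of_int (sumneg cs) \<le> peval cs t" using "2.prems"(2,3) sumneg_bound by auto
    moreover have "t * peval cs t \<ge> - of_int (sumneg cs)"
    proof -
      have s0: "0 \<le> sumneg cs" unfolding sumneg_def by (induction cs) auto
      have "t * peval cs t \<ge> t * (- of_int (sumneg cs))"
        using "2.prems"(2,3) \<open>- of_int (sumneg cs) \<le> peval cs t\<close> by (intro mult_left_mono) auto
      moreover have "t * (- of_int (sumneg cs)) \<ge> - of_int (sumneg cs)"
        using "2.prems"(2,3) s0 mult_left_le_one_le[of "of_int (sumneg cs)" t] by simp
      ultimately show ?thesis by linarith
    qed
    ultimately show ?thesis using True by simp
  next
    case F1: False
    show ?thesis
    proof (cases "c = 0 \<and> chk n cs")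
      case True
      then have "0 < peval cs t" using "2.IH"(1) "2.prems" by blast
      then show ?thesis using True "2.prems"(2,3) by simp
    next
      case False
      have H: "sumneg cs < c \<or> (c = 0 \<and> chk n cs) \<or> (case n of 0 \<Rightarrow> False | Suc m \<Rightarrow> chk m (scl 1 2 (c#cs)) \<and> chk m (shk 1 (scl 1 2 (c#cs))))"
        using "2.prems"(1) unfolding chk.simps(2)[of n c cs] .
      then have H2: "case n of 0 \<Rightarrow> False | Suc m \<Rightarrow> chk m (scl 1 2 (c#cs)) \<and> chk m (shk 1 (scl 1 2 (c#cs)))"
        using F1 False by blast
      then obtain m where n: "n = Suc m" and L: "chk m (scl 1 2 (c#cs))" and R: "chk m (shk 1 (scl 1 2 (c#cs)))"
        by (cases n) auto
      let ?k = "Suc (length cs)"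
      show ?thesis
      proof (cases "t \<le> 1/2")
        case True
        have "0 < peval (scl 1 2 (c#cs)) (2*t)"
          by (rule "2.IH"(2)[OF n L]) (use "2.prems"(2,3) True in auto)
        also have "peval (scl 1 2 (c#cs)) (2*t) = 2 ^ ?k * peval (c#cs) t"
          using peval_scl[of 2 1 "c#cs" "2*t"] by (simp del: peval.simps scl.simps)
        finally show ?thesis by (simp add: zero_less_mult_iff)
      next
        case False2: False
        have "0 < peval (shk 1 (scl 1 2 (c#cs))) (2*t - 1)"
          by (rule "2.IH"(3)[OF n R]) (use "2.prems"(2,3) False2 in auto)
        also have "peval (shk 1 (scl 1 2 (c#cs))) (2*t - 1) = peval (scl 1 2 (c#cs)) (2*t)"
          by (simp add: peval_shk del: peval.simps scl.simps shk.simps)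
        also have "\<dots> = 2 ^ ?k * peval (c#cs) t"
          using peval_scl[of 2 1 "c#cs" "2*t"] by (simp del: peval.simps scl.simps)
        finally show ?thesis by (simp add: zero_less_mult_iff)
      qed
    qed
  qed
qed

lemma chk_interval:
  assumes "chk n (scl m 1 (shk n1 (scl 1 N p)))" "0 < m" "0 < N"
    and "of_int n1 / of_int N < y" "y \<le> of_int (n1 + m) / of_int N"
  shows "0 < peval p y"
proof -
  define t where "t = (of_int N * y - of_int n1) / of_int m"
  have t0: "0 < t" "t \<le> 1" using assms unfolding t_def
    by (auto simp: field_simps)
  have "0 < peval (scl m 1 (shk n1 (scl 1 N p))) t" using chk_sound[OF assms(1) t0] .
  also have "\<dots> = peval (scl 1 N p) (of_int n1 + of_int m * t)"
    by (simp add: peval_scl peval_shk del: scl.simps)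
  also have "of_int n1 + of_int m * t = of_int N * y" unfolding t_def using assms by simp
  also have "peval (scl 1 N p) (of_int N * y) = of_int N ^ length p * peval p y"
    using assms by (simp add: peval_scl del: scl.simps)
  finally show ?thesis using assms by (simp add: zero_less_mult_iff)
qed


lemma step_le:
  fixes f g f' g' :: "real \<Rightarrow> real"
  assumes x: "0 \<le> x" and i: "f 0 \<le> g 0"
    and df: "\<And>t. 0 \<le> t \<Longrightarrow> (f has_real_derivative f' t) (at t)"
    and dg: "\<And>t. 0 \<le> t \<Longrightarrow> (g has_real_derivative g' t) (at t)"
    and le: "\<And>t. 0 \<le> t \<Longrightarrow> t \<le> x \<Longrightarrow> f' t \<le> g' t"
  shows "f x \<le> g x"
proof -
  have "(\<lambda>t. g t - f t) 0 \<le> (\<lambda>t. g t - f t) x"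
  proof (rule DERIV_nonneg_imp_nondecreasing[OF x])
    fix t assume t: "0 \<le> t" "t \<le> x"
    show "\<exists>y. ((\<lambda>t. g t - f t) has_real_derivative y) (at t) \<and> 0 \<le> y"
      using DERIV_diff[OF dg[OF t(1)] df[OF t(1)]] le[OF t] by auto
  qed
  then show ?thesis using i by simp
qed

lemma tb1: "0 \<le> (x::real) \<Longrightarrow> sin x \<le> x"
  by (rule step_le[where f="sin" and g="\<lambda>t. t" and f'=cos and g'="\<lambda>t. 1"]) (auto intro!: derivative_eq_intros)

lemma tb2: "0 \<le> (x::real) \<Longrightarrow> 1 - x^2/2 \<le> cos x"
  by (rule step_le[where f="\<lambda>t. 1 - t^2/2" and g="cos" and f'="\<lambda>t. -t" and g'="\<lambda>t. - sin t"])
     (auto intro!: derivative_eq_intros, smt (verit) tb1)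

lemma tb3: "0 \<le> (x::real) \<Longrightarrow> x - x^3/6 \<le> sin x"
  by (rule step_le[where f="\<lambda>t. t - t^3/6" and g="sin" and f'="\<lambda>t. 1 - t^2/2" and g'="\<lambda>t. cos t"])
     (auto intro!: derivative_eq_intros, smt (verit) tb2)

lemma tb4: "0 \<le> (x::real) \<Longrightarrow> cos x \<le> 1 - x^2/2 + x^4/24"
  by (rule step_le[where f="cos" and g="\<lambda>t. 1 - t^2/2 + t^4/24" and g'="\<lambda>t. - t + t^3/6" and f'="\<lambda>t. - sin t"])
     (auto intro!: derivative_eq_intros, smt (verit) tb3)

lemma tb5: "0 \<le> (x::real) \<Longrightarrow> sin x \<le> x - x^3/6 + x^5/120"
  by (rule step_le[where f="sin" and g="\<lambda>t. t - t^3/6 + t^5/120" and g'="\<lambda>t. 1 - t^2/2 + t^4/24" and f'="\<lambda>t. cos t"])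
     (auto intro!: derivative_eq_intros, smt (verit) tb4)

lemma tb6: "0 \<le> (x::real) \<Longrightarrow> 1 - x^2/2 + x^4/24 - x^6/720 \<le> cos x"
  by (rule step_le[where f="\<lambda>t. 1 - t^2/2 + t^4/24 - t^6/720" and g="cos" and f'="\<lambda>t. - t + t^3/6 - t^5/120" and g'="\<lambda>t. - sin t"])
     (auto intro!: derivative_eq_intros, smt (verit) tb5)

lemma tb7: "0 \<le> (x::real) \<Longrightarrow> x - x^3/6 + x^5/120 - x^7/5040 \<le> sin x"
  by (rule step_le[where f="\<lambda>t. t - t^3/6 + t^5/120 - t^7/5040" and g="sin" and f'="\<lambda>t. 1 - t^2/2 + t^4/24 - t^6/720" and g'="\<lambda>t. cos t"])
     (auto intro!: derivative_eq_intros, smt (verit) tb6)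

lemma tb8: "0 \<le> (x::real) \<Longrightarrow> cos x \<le> 1 - x^2/2 + x^4/24 - x^6/720 + x^8/40320"
  by (rule step_le[where f="cos" and g="\<lambda>t. 1 - t^2/2 + t^4/24 - t^6/720 + t^8/40320" and g'="\<lambda>t. - t + t^3/6 - t^5/120 + t^7/5040" and f'="\<lambda>t. - sin t"])
     (auto intro!: derivative_eq_intros, smt (verit) tb7)

lemma tb9: "0 \<le> (x::real) \<Longrightarrow> sin x \<le> x - x^3/6 + x^5/120 - x^7/5040 + x^9/362880"
  by (rule step_le[where f="sin" and g="\<lambda>t. t - t^3/6 + t^5/120 - t^7/5040 + t^9/362880" and g'="\<lambda>t. 1 - t^2/2 + t^4/24 - t^6/720 + t^8/40320" and f'="\<lambda>t. cos t"])
     (auto intro!: derivative_eq_intros, smt (verit) tb8)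

lemma tb10: "0 \<le> (x::real) \<Longrightarrow> 1 - x^2/2 + x^4/24 - x^6/720 + x^8/40320 - x^10/3628800 \<le> cos x"
  by (rule step_le[where f="\<lambda>t. 1 - t^2/2 + t^4/24 - t^6/720 + t^8/40320 - t^10/3628800" and g="cos" and f'="\<lambda>t. - t + t^3/6 - t^5/120 + t^7/5040 - t^9/362880" and g'="\<lambda>t. - sin t"])
     (auto intro!: derivative_eq_intros, smt (verit) tb9)

lemma dD: "((\<lambda>t. sin t - t * cos t) has_real_derivative (t * sin t)) (at t)"
  by (auto intro!: derivative_eq_intros)

lemma tbDh: "0 \<le> (x::real) \<Longrightarrow> sin x - x * cos x \<le> x^3/3 - x^5/30 + x^7/840"
  apply (rule step_le[where f="\<lambda>t. sin t - t * cos t" and g="\<lambda>t. t^3/3 - t^5/30 + t^7/840" and f'="\<lambda>t. t * sin t" and g'="\<lambda>t. t^2 - t^4/6 + t^6/120"])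
      apply (auto intro!: derivative_eq_intros simp: dD)
  subgoal for t
    using mult_left_mono[OF tb5[of t], of t] by (simp add: algebra_simps power_numeral_reduce)
  done

lemma tbDl: "0 \<le> (x::real) \<Longrightarrow> x^3/3 - x^5/30 + x^7/840 - x^9/45360 \<le> sin x - x * cos x"
  apply (rule step_le[where g="\<lambda>t. sin t - t * cos t" and f="\<lambda>t. t^3/3 - t^5/30 + t^7/840 - t^9/45360" and g'="\<lambda>t. t * sin t" and f'="\<lambda>t. t^2 - t^4/6 + t^6/120 - t^8/5040"])
      apply (auto intro!: derivative_eq_intros simp: dD)
  subgoal for t
    using mult_left_mono[OF tb7[of t], of t] by (simp add: algebra_simps power_numeral_reduce)
  done


lemma chk_si3: "chk 30 (scl 121 1 (shk 0 (scl 1 49 [5040,-840,42,-1])))"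
  by code_simp
lemma chk_dl3: "chk 30 (scl 121 1 (shk 0 (scl 1 49 [15120,-1512,54,-1])))"
  by code_simp
lemma chk_co3: "chk 30 (scl 17689 1 (shk 0 (scl 1 10000 [720,-360,30,-1])))"
  by code_simp
lemma chk_L: "chk 30 (scl 121 1 (shk 0 (scl 1 49 (padd (map ((*) (40320*840^5)) (ppow [5040,-840,42,-1] 6)) (map ((*) (-243*5040^6)) (pmul [40320,-20160,1680,-56,1] (ppow [280,-28,1] 5)))))))"
  by code_simp
lemma chk_U1: "chk 30 (scl 17689 1 (shk 0 (scl 1 10000 (padd (map ((*) (3^9*120^10)) (pmul [720,-360,30,-1] (ppow [15120,-1512,54,-1] 9))) (map ((*) (-720*45360^9)) (ppow [120,-20,1] 10))))))"
  by code_simp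
lemma chk_U3: "chk 30 (scl 1957 1 (shk 10143 (scl 1 4900 (padd (map ((*) (40320*840^10)) (ppow [5040,-840,42,-1] 11)) (map ((*) (-60000*5040^11)) (pmul [40320,-20160,1680,-56,1] (ppow [280,-28,1] 10)))))))"
  by code_simp


lemma pi_ub: "pi < 22/7"
proof (rule ccontr)
  assume "\<not> pi < 22/7"
  then have "11/7 \<le> pi/2" by simp
  then have "0 \<le> cos (11/7::real)" by (intro cos_ge_zero) auto
  moreover have "cos (11/7::real) \<le> 1 - (11/7)^2/2 + (11/7)^4/24 - (11/7)^6/720 + (11/7::real)^8/40320"
    by (rule tb8) simp
  ultimately show False by (simp add: power_divide)
qed

lemma pi_lb: "157/50 < pi"
proof (rule ccontr)
  assume "\<not> 157/50 < pi"
  then have "pi/2 \<le> 157/100" by simp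
  then have "cos (157/100::real) \<le> cos (pi/2)"
    using pi_ge_two by (intro cos_monotone_0_pi_le) auto
  then have "cos (157/100::real) \<le> 0" by simp
  moreover have "1 - (157/100)^2/2 + (157/100)^4/24 - (157/100)^6/720 + (157/100)^8/40320 - (157/100::real)^10/3628800 \<le> cos (157/100::real)"
    by (rule tb10) simp
  ultimately show False by (simp add: power_divide)
qed

lemma ev_si3: "x * peval [5040,-840,42,-1] (x^2) / 5040 = x - x^3/6 + x^5/120 - x^7/5040"
  by (simp add: field_simps power_numeral_reduce)
lemma ev_si2: "x * peval [120,-20,1] (x^2) / 120 = x - x^3/6 + x^5/120"
  by (simp add: field_simps power_numeral_reduce)
lemma ev_co4: "peval [40320,-20160,1680,-56,1] (x^2) / 40320 = 1 - x^2/2 + x^4/24 - x^6/720 + x^8/40320"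
  by (simp add: field_simps power_numeral_reduce)
lemma ev_co3: "peval [720,-360,30,-1] (x^2) / 720 = 1 - x^2/2 + x^4/24 - x^6/720"
  by (simp add: field_simps power_numeral_reduce)
lemma ev_dh2: "x^3 * peval [280,-28,1] (x^2) / 840 = x^3/3 - x^5/30 + x^7/840"
  by (simp add: field_simps power_numeral_reduce)
lemma ev_dl3: "x^3 * peval [15120,-1512,54,-1] (x^2) / 45360 = x^3/3 - x^5/30 + x^7/840 - x^9/45360"
  by (simp add: field_simps power_numeral_reduce)


lemma pow_root: assumes "0 < c" "0 < m" shows "(c powr (1/real m))^m = c"
  using assms by (simp add: powr_power)

lemma pow_iff: assumes "0 \<le> x" "0 \<le> y" "0 < m" shows "x^m < y^m \<longleftrightarrow> x < (y::real)"
  using assms by (meson power_less_imp_less_base power_strict_mono)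

lemma sign_pos:
  fixes c s S t D a :: real and m :: nat
  assumes "0 < c" "0 < s" "0 \<le> S" "0 < t" "0 \<le> D" "0 < a" "0 < m"
  shows "(0 < c powr (-1/m) * S - a * s powr (-1/m) * D / t^2) \<longleftrightarrow> (a^m * D^m * c < (S * t^2)^m * s)"
proof -
  define u where "u = c powr (1/m)"
  define v where "v = s powr (1/m)"
  have u: "0 < u" "u^m = c" using assms by (auto simp: u_def pow_root)
  have v: "0 < v" "v^m = s" using assms by (auto simp: v_def pow_root)
  have cu: "c powr (-1/m) = 1/u" unfolding u_def by (simp add: powr_minus_divide[symmetric])
  have sv: "s powr (-1/m) = 1/v" unfolding v_def by (simp add: powr_minus_divide[symmetric])
  have "(0 < c powr (-1/m) * S - a * s powr (-1/m) * D / t^2) \<longleftrightarrow> (a * D * u < S * t^2 * v)"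
    using u v assms unfolding cu sv by (simp add: field_simps)
  also have "\<dots> \<longleftrightarrow> (a * D * u)^m < (S * t^2 * v)^m"
    using u v assms by (intro pow_iff[symmetric]) auto
  also have "(a * D * u)^m = a^m * D^m * c" using u by (simp add: power_mult_distrib)
  also have "(S * t^2 * v)^m = (S * t^2)^m * s" using v by (simp add: power_mult_distrib)
  finally show ?thesis .
qed

lemma sign_neg:
  fixes c s S t D a :: real and m :: nat
  assumes "0 < c" "0 < s" "0 \<le> S" "0 < t" "0 \<le> D" "0 < a" "0 < m"
  shows "(c powr (-1/m) * S - a * s powr (-1/m) * D / t^2 < 0) \<longleftrightarrow> ((S * t^2)^m * s < a^m * D^m * c)"
proof -
  define u where "u = c powr (1/m)"
  define v where "v = s powr (1/m)"
  have u: "0 < u" "u^m = c" using assms by (auto simp: u_def pow_root)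
  have v: "0 < v" "v^m = s" using assms by (auto simp: v_def pow_root)
  have cu: "c powr (-1/m) = 1/u" unfolding u_def by (simp add: powr_minus_divide[symmetric])
  have sv: "s powr (-1/m) = 1/v" unfolding v_def by (simp add: powr_minus_divide[symmetric])
  have "(c powr (-1/m) * S - a * s powr (-1/m) * D / t^2 < 0) \<longleftrightarrow> (S * t^2 * v < a * D * u)"
    using u v assms unfolding cu sv by (simp add: field_simps)
  also have "\<dots> \<longleftrightarrow> (S * t^2 * v)^m < (a * D * u)^m"
    using u v assms by (intro pow_iff[symmetric]) auto
  also have "(a * D * u)^m = a^m * D^m * c" using u by (simp add: power_mult_distrib)
  also have "(S * t^2 * v)^m = (S * t^2)^m * s" using v by (simp add: power_mult_distrib)
  finally show ?thesis .
qed

lemma trig_pos: assumes "0 < t" "t < pi/2" shows "0 < sin t" "0 < cos t" "cos t < 1" "0 < sin t / t"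
proof -
  show "0 < sin t" using assms by (intro sin_gt_zero2) auto
  show "0 < cos t" using assms by (intro cos_gt_zero) auto
  have "cos t < cos 0" using assms by (intro cos_monotone_0_pi) auto
  then show "cos t < 1" by simp
  show "0 < sin t / t" using assms \<open>0 < sin t\<close> by simp
qed

lemma deriv_g:
  assumes "0 < t" "t < pi/2"
  shows "((\<lambda>t. a * (sin t / t) powr r - cos t powr r) has_real_derivative
           r * (cos t powr (r - 1) * sin t - a * (sin t / t) powr (r - 1) * (sin t - t * cos t) / t^2)) (at t)"
  using assms trig_pos[OF assms]
  by (auto intro!: derivative_eq_intros simp: field_simps power2_eq_square)


lemma sinx_lim: "((\<lambda>x. sin x / x::real) \<longlongrightarrow> 1) (at_right 0)"
proof -
  have "((\<lambda>x. sin x / x::real) \<longlongrightarrow> 1) (at 0)"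
    using DERIV_sin [of 0] by (auto simp add: has_field_derivative_def field_has_derivative_at)
  then show ?thesis by (rule tendsto_mono[OF at_le, rotated]) simp
qed

lemma x_bounds: assumes "0 < x" "x < pi/2" shows "x^2 \<le> 121/49"
proof -
  have "x < 11/7" using assms pi_ub by simp
  then have "x^2 \<le> (11/7)^2" using assms by (intro power_mono) auto
  then show ?thesis by (simp add: power_divide)
qed

lemma si3_pos: assumes "0 < y" "y \<le> 121/49" shows "0 < peval [5040,-840,42,-1] y"
  using chk_interval[OF chk_si3] assms by simp

lemma dl3_pos: assumes "0 < y" "y \<le> 121/49" shows "0 < peval [15120,-1512,54,-1] y"
  using chk_interval[OF chk_dl3] assms by simp

lemma D_pos: assumes "0 < x" "x < pi/2" shows "0 < sin x - x * cos x"
proof -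
  have "0 < x^3 * peval [15120,-1512,54,-1] (x^2) / 45360"
    using dl3_pos[of "x^2"] x_bounds[OF assms] assms by simp
  also have "\<dots> \<le> sin x - x * cos x" unfolding ev_dl3 using tbDl assms by simp
  finally show ?thesis .
qed

lemma T_ineq: assumes x: "0 < x" "x < pi/2"
  shows "3^5 * (sin x - x * cos x)^5 * cos x < (sin x * x^2)^5 * (sin x / x)"
proof -
  define y where "y = x^2"
  have y: "0 < y" "y \<le> 121/49" using x x_bounds[OF x] by (auto simp: y_def)
  define S3 where "S3 = peval [5040,-840,42,-1] y"
  define C4 where "C4 = peval [40320,-20160,1680,-56,1] y"
  define H2 where "H2 = peval [280,-28,1] y"
  have P: "0 < 40320*840^5 * S3^6 - 243*5040^6 * (C4 * H2^5)"
    using chk_interval[OF chk_L, of y] y unfolding S3_def C4_def H2_def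
    by (simp only: peval_padd peval_map_mult peval_pmul peval_ppow) simp
  have S3: "0 < S3" using si3_pos[OF y] by (simp add: S3_def)
  define D where "D = sin x - x * cos x"
  have D0: "0 < D" using D_pos[OF x] by (simp add: D_def)
  have Dle: "D \<le> x^3 * H2 / 840" unfolding D_def H2_def y_def ev_dh2 using tbDh x by simp
  have cle: "cos x \<le> C4 / 40320" unfolding C4_def y_def ev_co4 using tb8 x by simp
  have sge: "x * S3 / 5040 \<le> sin x" unfolding S3_def y_def ev_si3 using tb7 x by simp
  have c0: "0 < cos x" using trig_pos[OF x] by simp
  have "3^5 * D^5 * cos x \<le> 3^5 * (x^3 * H2 / 840)^5 * (C4 / 40320)"
    using D0 Dle c0 cle by (intro mult_mono power_mono) auto
  also have "\<dots> = x^15 * (243 * (C4 * H2^5) / (840^5*40320))"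
    by (simp add: power_mult_distrib power_divide field_simps flip: power_mult)
  also have "\<dots> < x^15 * (S3^6 / 5040^6)"
    using P x by (intro mult_strict_left_mono) (auto simp: field_simps)
  also have "\<dots> = (x * S3 / 5040)^6 * x^9"
    by (simp add: power_mult_distrib power_divide field_simps flip: power_add)
  also have "\<dots> \<le> sin x ^ 6 * x^9"
    using S3 x sge by (intro mult_right_mono power_mono) auto
  also have "\<dots> = (sin x * x^2)^5 * (sin x / x)"
    using x by (simp add: power_mult_distrib field_simps flip: power_mult power_add) algebra
  finally show ?thesis by (simp add: D_def)
qed


lemma ev_small: "0 < x \<Longrightarrow> eventually (\<lambda>e. 0 < e \<and> e < x) (at_right (0::real))"
  by (auto simp: eventually_at_right_field intro!: exI[of _ x])

lemma incr_lim:
  fixes g :: "real \<Rightarrow> real"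
  assumes lim: "(g \<longlongrightarrow> L) (at_right 0)" and x: "0 < x"
    and mono: "\<And>a b. 0 < a \<Longrightarrow> a < b \<Longrightarrow> b \<le> x \<Longrightarrow> g a < g b"
  shows "L < g x"
proof -
  have x2: "0 < x/2" using x by simp
  have "eventually (\<lambda>e. g e \<le> g (x/2)) (at_right 0)"
    using ev_small[OF x2]
  proof eventually_elim
    case (elim e) then show ?case using mono[of e "x/2"] x by auto
  qed
  then have "L \<le> g (x/2)" by (intro tendsto_upperbound[OF lim]) auto
  also have "g (x/2) < g x" using x by (intro mono) auto
  finally show ?thesis .
qed

lemma decr_lim:
  fixes g :: "real \<Rightarrow> real"
  assumes lim: "(g \<longlongrightarrow> L) (at_right 0)" and x: "0 < x"
    and mono: "\<And>a b. 0 < a \<Longrightarrow> a < b \<Longrightarrow> b \<le> x \<Longrightarrow> g b < g a"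
  shows "g x < L"
proof -
  have "-L < - g x"
    by (rule incr_lim[where g="\<lambda>t. - g t"]) (use lim x mono in \<open>auto intro: tendsto_minus\<close>)
  then show ?thesis by simp
qed

lemma g_lim: fixes a r :: real shows "((\<lambda>t. a * (sin t / t) powr r - cos t powr r) \<longlongrightarrow> a - 1) (at_right 0)"
proof -
  have l1: "((\<lambda>t. (sin t / t) powr r) \<longlongrightarrow> 1 powr r) (at_right 0)"
    using tendsto_powr[OF sinx_lim tendsto_const[of r]] by simp
  have l0: "((\<lambda>t::real. cos t) \<longlongrightarrow> cos 0) (at_right 0)"
    using tendsto_cos[OF tendsto_ident_at[of "0::real" "{0<..}"]] by simp
  have l2: "((\<lambda>t. cos t powr r) \<longlongrightarrow> cos 0 powr r) (at_right 0)"
    using tendsto_powr[OF l0 tendsto_const[of r]] by simp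
  have "((\<lambda>t. a * (sin t / t) powr r - cos t powr r) \<longlongrightarrow> a * 1 powr r - cos 0 powr r) (at_right 0)"
    by (intro tendsto_diff tendsto_mult tendsto_const l1 l2)
  then show ?thesis by simp
qed

lemma L_core: assumes x: "0 < x" "x < pi/2"
  shows "2 < 3 * (sin x / x) powr (4/5) - cos x powr (4/5)"
proof -
  have "3 - 1 < (\<lambda>t. 3 * (sin t / t) powr (4/5) - cos t powr (4/5)) x"
  proof (rule incr_lim[OF g_lim x(1)])
    fix a b :: real assume ab: "0 < a" "a < b" "b \<le> x"
    show "(\<lambda>t. 3 * (sin t / t) powr (4/5) - cos t powr (4/5)) a < (\<lambda>t. 3 * (sin t / t) powr (4/5) - cos t powr (4/5)) b"
    proof (rule DERIV_pos_imp_increasing[OF ab(2)])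
      fix t assume t: "a \<le> t" "t \<le> b"
      then have t0: "0 < t" "t < pi/2" using ab x by auto
      have e: "(4/5::real) - 1 = -1 / real (5::nat)" by simp
      note tp = trig_pos[OF t0]
      have "0 < cos t powr (-1 / real (5::nat)) * sin t - 3 * (sin t / t) powr (-1 / real (5::nat)) * (sin t - t * cos t) / t^2"
        using tp t0 D_pos[OF t0] T_ineq[OF t0]
        by (subst sign_pos) auto
      then show "\<exists>y. ((\<lambda>t. 3 * (sin t / t) powr (4/5) - cos t powr (4/5)) has_real_derivative y) (at t) \<and> 0 < y"
        using deriv_g[OF t0, of 3 "4/5"] unfolding e by (intro exI conjI) auto
    qed
  qed
  then show ?thesis by simp
qed


lemma co3_pos: assumes "0 < y" "y \<le> 17689/10000" shows "0 < peval [720,-360,30,-1] y"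
  using chk_interval[OF chk_co3] assms by simp

lemma U1_poly: fixes x :: real assumes x: "0 < x" "x \<le> 133/100"
  shows "(sin x * x^2)^9 * (sin x / x) < 3^9 * (sin x - x * cos x)^9 * cos x"
proof -
  have x2: "x < pi/2" using x pi_lb by simp
  define y where "y = x^2"
  have "x^2 \<le> (133/100)^2" using x by (intro power_mono) auto
  then have y: "0 < y" "y \<le> 17689/10000" using x by (auto simp: y_def power_divide)
  define S2 where "S2 = peval [120,-20,1] y"
  define C3 where "C3 = peval [720,-360,30,-1] y"
  define L3 where "L3 = peval [15120,-1512,54,-1] y"
  have P: "0 < 3^9*120^10 * (C3 * L3^9) - 720*45360^9 * S2^10"
    using chk_interval[OF chk_U1, of y] y unfolding S2_def C3_def L3_def
    by (simp only: peval_padd peval_map_mult peval_pmul peval_ppow) simp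
  have C3: "0 < C3" using co3_pos[OF y] by (simp add: C3_def)
  have L3: "0 < L3" using dl3_pos[of y] y by (simp add: L3_def)
  define D where "D = sin x - x * cos x"
  have Dge: "x^3 * L3 / 45360 \<le> D" unfolding D_def L3_def y_def ev_dl3 using tbDl x by simp
  have cge: "C3 / 720 \<le> cos x" unfolding C3_def y_def ev_co3 using tb6 x by simp
  have sle: "sin x \<le> x * S2 / 120" unfolding S2_def y_def ev_si2 using tb5 x by simp
  have s0: "0 < sin x" using trig_pos[OF x(1) x2] by simp
  have "(sin x * x^2)^9 * (sin x / x) = sin x ^ 10 * x^17"
    using x by (simp add: power_mult_distrib field_simps flip: power_mult power_add) algebra
  also have "\<dots> \<le> (x * S2 / 120)^10 * x^17"
    using s0 sle x by (intro mult_right_mono power_mono) auto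
  also have "\<dots> = x^27 * (S2^10 / 120^10)"
    by (simp add: power_mult_distrib power_divide field_simps flip: power_add)
  also have "\<dots> < x^27 * (3^9 * (C3 * L3^9) / (720 * 45360^9))"
    using P x by (intro mult_strict_left_mono) (auto simp: field_simps)
  also have "\<dots> = 3^9 * (x^3 * L3 / 45360)^9 * (C3 / 720)"
    by (simp add: power_mult_distrib power_divide field_simps flip: power_mult)
  also have "\<dots> \<le> 3^9 * D^9 * cos x"
    using Dge cge C3 L3 x order_trans[OF _ Dge, of 0] by (intro mult_mono power_mono mult_left_mono) auto
  finally show ?thesis by (simp add: D_def)
qed

lemma U1_core: fixes x :: real assumes x: "0 < x" "x \<le> 133/100"
  shows "3 * (sin x / x) powr (8/9) - cos x powr (8/9) < 2"
proof -
  have "(\<lambda>t. 3 * (sin t / t) powr (8/9) - cos t powr (8/9)) x < 3 - 1"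
  proof (rule decr_lim[OF g_lim x(1)])
    fix a b :: real assume ab: "0 < a" "a < b" "b \<le> x"
    show "(\<lambda>t. 3 * (sin t / t) powr (8/9) - cos t powr (8/9)) b < (\<lambda>t. 3 * (sin t / t) powr (8/9) - cos t powr (8/9)) a"
    proof (rule DERIV_neg_imp_decreasing[OF ab(2)])
      fix t assume t: "a \<le> t" "t \<le> b"
      then have t1: "0 < t" "t \<le> 133/100" using ab x by auto
      then have t0: "0 < t" "t < pi/2" using pi_lb by auto
      have e: "(8/9::real) - 1 = -1 / real (9::nat)" by simp
      note tp = trig_pos[OF t0]
      have "cos t powr (-1 / real (9::nat)) * sin t - 3 * (sin t / t) powr (-1 / real (9::nat)) * (sin t - t * cos t) / t^2 < 0"
        using tp t0 D_pos[OF t0] U1_poly[OF t1]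
        by (subst sign_neg) auto
      then show "\<exists>y. ((\<lambda>t. 3 * (sin t / t) powr (8/9) - cos t powr (8/9)) has_real_derivative y) (at t) \<and> y < 0"
        using deriv_g[OF t0, of 3 "8/9"] unfolding e by (intro exI conjI) (auto simp: mult_pos_neg)
    qed
  qed
  then show ?thesis by simp
qed

lemma U3_poly: fixes x :: real assumes x: "144/100 \<le> x" "x < pi/2"
  shows "60000 * (sin x - x * cos x)^10 * cos x < (sin x * x^2)^10 * (sin x / x)"
proof -
  have x0: "0 < x" using x by simp
  define y where "y = x^2"
  have "(144/100)^2 \<le> x^2" using x by (intro power_mono) auto
  then have y: "207/100 < y" "y \<le> 121/49" using x x_bounds[OF x0 x(2)] by (auto simp: y_def power_divide)
  define S3 where "S3 = peval [5040,-840,42,-1] y"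
  define C4 where "C4 = peval [40320,-20160,1680,-56,1] y"
  define H2 where "H2 = peval [280,-28,1] y"
  have P: "0 < 40320*840^10 * S3^11 - 60000*5040^11 * (C4 * H2^10)"
    using chk_interval[OF chk_U3, of y] y unfolding S3_def C4_def H2_def
    by (simp only: peval_padd peval_map_mult peval_pmul peval_ppow) simp
  have S3: "0 < S3" using si3_pos[of y] y by (simp add: S3_def)
  define D where "D = sin x - x * cos x"
  have D0: "0 < D" using D_pos[OF x0 x(2)] by (simp add: D_def)
  have Dle: "D \<le> x^3 * H2 / 840" unfolding D_def H2_def y_def ev_dh2 using tbDh x0 by simp
  have cle: "cos x \<le> C4 / 40320" unfolding C4_def y_def ev_co4 using tb8 x0 by simp
  have sge: "x * S3 / 5040 \<le> sin x" unfolding S3_def y_def ev_si3 using tb7 x0 by simp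
  have c0: "0 < cos x" using trig_pos[OF x0 x(2)] by simp
  have "60000 * D^10 * cos x \<le> 60000 * (x^3 * H2 / 840)^10 * (C4 / 40320)"
    using D0 Dle c0 cle by (intro mult_mono power_mono mult_left_mono) auto
  also have "\<dots> = x^30 * (60000 * (C4 * H2^10) / (840^10*40320))"
    by (simp add: power_mult_distrib power_divide field_simps flip: power_mult)
  also have "\<dots> < x^30 * (S3^11 / 5040^11)"
    using P x0 by (intro mult_strict_left_mono) (auto simp: field_simps)
  also have "\<dots> = (x * S3 / 5040)^11 * x^19"
    by (simp add: power_mult_distrib power_divide field_simps flip: power_add)
  also have "\<dots> \<le> sin x ^ 11 * x^19"
    using S3 x0 sge by (intro mult_right_mono power_mono) auto
  also have "\<dots> = (sin x * x^2)^10 * (sin x / x)"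
    using x0 by (simp add: power_mult_distrib field_simps flip: power_mult power_add) algebra
  finally show ?thesis by (simp add: D_def)
qed


lemma sx_decr: fixes a x :: real assumes "0 < a" "a \<le> x" "x < pi/2"
  shows "sin x / x \<le> sin a / a"
proof (rule DERIV_nonpos_imp_nonincreasing[OF assms(2)])
  fix t assume t: "a \<le> t" "t \<le> x"
  then have t0: "0 < t" "t < pi/2" using assms by auto
  have "((\<lambda>t. sin t / t) has_real_derivative (- (sin t - t * cos t) / t^2)) (at t)"
    using t0 by (auto intro!: derivative_eq_intros simp: field_simps power2_eq_square)
  moreover have "- (sin t - t * cos t) / t^2 \<le> 0"
    using D_pos[OF t0] by (intro divide_nonpos_nonneg) auto
  ultimately show "\<exists>y. ((\<lambda>t. sin t / t) has_real_derivative y) (at t) \<and> y \<le> 0" by blast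
qed

lemma powr89_le: fixes S A :: real assumes "0 < S" "S^8 \<le> A^9" "0 \<le> A" shows "S powr (8/9) \<le> A"
proof (rule ccontr)
  assume "\<not> S powr (8/9) \<le> A"
  then have "A^9 < (S powr (8/9))^9" using assms by (intro power_strict_mono) auto
  also have "(S powr (8/9))^9 = S^8" using assms by (simp add: powr_power)
  finally show False using assms by simp
qed

lemma powr89_ge: fixes C B :: real assumes "0 < C" "B^9 \<le> C^8" "0 \<le> B" shows "B \<le> C powr (8/9)"
proof (rule ccontr)
  assume "\<not> B \<le> C powr (8/9)"
  then have "(C powr (8/9))^9 < B^9" using assms by (intro power_strict_mono) auto
  also have "(C powr (8/9))^9 = C^8" using assms by (simp add: powr_power)
  finally show False using assms by simp
qed

lemma num_iv:
  fixes a b x S C A B :: real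
  assumes ab: "0 < a" "a \<le> x" "x \<le> b" "b \<le> 3/2"
  and S: "a - a^3/6 + a^5/120 - a^7/5040 + a^9/362880 \<le> S * a"
  and C: "C \<le> 1 - b^2/2 + b^4/24 - b^6/720 + b^8/40320 - b^10/3628800"
  and C0: "0 < C" and A: "S^8 \<le> A^9" "0 \<le> A" and B: "B^9 \<le> C^8" "0 \<le> B" and fin: "3*A < 2 + B"
  shows "3 * (sin x / x) powr (8/9) - cos x powr (8/9) < 2"
proof -
  have b2: "b < pi/2" using ab pi_lb by simp
  have x0: "0 < x" "x < pi/2" using ab b2 by auto
  have a0: "0 < a" "a < pi/2" using ab b2 by auto
  have sxa: "sin x / x \<le> sin a / a" using sx_decr ab x0 by blast
  have "sin a \<le> S * a" using tb9[of a] S ab by simp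
  then have sa: "sin a / a \<le> S" using ab by (simp add: divide_le_eq)
  have sx0: "0 < sin x / x" using trig_pos[OF x0] by simp
  have S0: "0 < S" using sx0 sxa sa by simp
  have "cos b \<le> cos x" using ab b2 by (intro cos_monotone_0_pi_le) auto
  moreover have "C \<le> cos b" using tb10[of b] C ab by simp
  ultimately have cC: "C \<le> cos x" by simp
  have "(sin x / x) powr (8/9) \<le> S powr (8/9)" using sx0 sxa sa by (intro powr_mono2) auto
  also have "\<dots> \<le> A" using powr89_le S0 A by blast
  finally have 1: "(sin x / x) powr (8/9) \<le> A" .
  have "B \<le> C powr (8/9)" using powr89_ge C0 B by blast
  also have "\<dots> \<le> cos x powr (8/9)" using C0 cC by (intro powr_mono2) auto
  finally have 2: "B \<le> cos x powr (8/9)" .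
  show ?thesis using 1 2 fin by simp
qed

lemma iv0: "(x::real) \<in> {0..} \<Longrightarrow> 133/100 \<le> x \<Longrightarrow> x \<le> 67/50 \<Longrightarrow> 3 * (sin x / x) powr (8/9) - cos x powr (8/9) < 2"
  by (rule num_iv[of "133/100" x "67/50" "73019/100000" "183/800" "2363/3125" "26949/100000"]) (simp_all add: power_divide)

lemma iv1: "(x::real) \<in> {0..} \<Longrightarrow> 67/50 \<le> x \<Longrightarrow> x \<le> 27/20 \<Longrightarrow> 3 * (sin x / x) powr (8/9) - cos x powr (8/9) < 2"
  by (rule num_iv[of "67/50" x "27/20" "72649/100000" "219/1000" "3011/4000" "1037/4000"]) (simp_all add: power_divide)

lemma iv2: "(x::real) \<in> {0..} \<Longrightarrow> 27/20 \<le> x \<Longrightarrow> x \<le> 34/25 \<Longrightarrow> 3 * (sin x / x) powr (8/9) - cos x powr (8/9) < 2"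
  by (rule num_iv[of "27/20" x "34/25" "18069/25000" "20923/100000" "74931/100000" "12447/50000"]) (simp_all add: power_divide)

lemma iv3: "(x::real) \<in> {0..} \<Longrightarrow> 34/25 \<le> x \<Longrightarrow> x \<le> 137/100 \<Longrightarrow> 3 * (sin x / x) powr (8/9) - cos x powr (8/9) < 2"
  by (rule num_iv[of "34/25" x "137/100" "35951/50000" "2493/12500" "74587/100000" "1491/6250"]) (simp_all add: power_divide)

lemma iv4: "(x::real) \<in> {0..} \<Longrightarrow> 137/100 \<le> x \<Longrightarrow> x \<le> 69/50 \<Longrightarrow> 3 * (sin x / x) powr (8/9) - cos x powr (8/9) < 2"
  by (rule num_iv[of "137/100" x "69/50" "71527/100000" "4741/25000" "74241/100000" "22811/100000"]) (simp_all add: power_divide)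

lemma iv5: "(x::real) \<in> {0..} \<Longrightarrow> 69/50 \<le> x \<Longrightarrow> x \<le> 139/100 \<Longrightarrow> 3 * (sin x / x) powr (8/9) - cos x powr (8/9) < 2"
  by (rule num_iv[of "69/50" x "139/100" "71149/100000" "17981/100000" "18473/25000" "21757/100000"]) (simp_all add: power_divide)

lemma iv6: "(x::real) \<in> {0..} \<Longrightarrow> 139/100 \<le> x \<Longrightarrow> x \<le> 7/5 \<Longrightarrow> 3 * (sin x / x) powr (8/9) - cos x powr (8/9) < 2"
  by (rule num_iv[of "139/100" x "7/5" "7077/10000" "4249/25000" "36771/50000" "10347/50000"]) (simp_all add: power_divide)

lemma iv7: "(x::real) \<in> {0..} \<Longrightarrow> 7/5 \<le> x \<Longrightarrow> x \<le> 141/100 \<Longrightarrow> 3 * (sin x / x) powr (8/9) - cos x powr (8/9) < 2"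
  by (rule num_iv[of "7/5" x "141/100" "7039/10000" "1601/10000" "73191/100000" "2453/12500"]) (simp_all add: power_divide)

lemma iv8: "(x::real) \<in> {0..} \<Longrightarrow> 141/100 \<le> x \<Longrightarrow> x \<le> 71/50 \<Longrightarrow> 3 * (sin x / x) powr (8/9) - cos x powr (8/9) < 2"
  by (rule num_iv[of "141/100" x "71/50" "8751/12500" "7511/50000" "36419/50000" "18543/100000"]) (simp_all add: power_divide)

lemma iv9: "(x::real) \<in> {0..} \<Longrightarrow> 71/50 \<le> x \<Longrightarrow> x \<le> 143/100 \<Longrightarrow> 3 * (sin x / x) powr (8/9) - cos x powr (8/9) < 2"
  by (rule num_iv[of "71/50" x "143/100" "8703/12500" "14033/100000" "72483/100000" "8727/50000"]) (simp_all add: power_divide)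

lemma iv10: "(x::real) \<in> {0..} \<Longrightarrow> 143/100 \<le> x \<Longrightarrow> x \<le> 1439/1000 \<Longrightarrow> 3 * (sin x / x) powr (8/9) - cos x powr (8/9) < 2"
  by (rule num_iv[of "143/100" x "1439/1000" "69239/100000" "13141/100000" "36063/50000" "1029/6250"]) (simp_all add: power_divide)

lemma iv11: "(x::real) \<in> {0..} \<Longrightarrow> 1439/1000 \<le> x \<Longrightarrow> x \<le> 36/25 \<Longrightarrow> 3 * (sin x / x) powr (8/9) - cos x powr (8/9) < 2"
  by (rule num_iv[of "1439/1000" x "36/25" "68891/100000" "6521/50000" "17951/25000" "8177/50000"]) (simp_all add: power_divide)

lemma U2_aux: fixes x :: real assumes "133/100 \<le> x" "x \<le> 144/100"
  shows "3 * (sin x / x) powr (8/9) - cos x powr (8/9) < 2"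
proof -
  show ?thesis
  proof (cases "x \<le> 67/50")
    case True then show ?thesis using iv0[of x] assms by simp
  next
    case False
    then have lb0: "67/50 \<le> x" by simp
    show ?thesis
    proof (cases "x \<le> 27/20")
      case True then show ?thesis using iv1[of x] assms lb0 by simp
    next
      case False
      then have lb1: "27/20 \<le> x" by simp
      show ?thesis
      proof (cases "x \<le> 34/25")
        case True then show ?thesis using iv2[of x] assms lb1 by simp
      next
        case False
        then have lb2: "34/25 \<le> x" by simp
        show ?thesis
        proof (cases "x \<le> 137/100")
          case True then show ?thesis using iv3[of x] assms lb2 by simp
        next
          case False
          then have lb3: "137/100 \<le> x" by simp
          show ?thesis
          proof (cases "x \<le> 69/50")
            case True then show ?thesis using iv4[of x] assms lb3 by simp
          next
            case False
            then have lb4: "69/50 \<le> x" by simp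
            show ?thesis
            proof (cases "x \<le> 139/100")
              case True then show ?thesis using iv5[of x] assms lb4 by simp
            next
              case False
              then have lb5: "139/100 \<le> x" by simp
              show ?thesis
              proof (cases "x \<le> 7/5")
                case True then show ?thesis using iv6[of x] assms lb5 by simp
              next
                case False
                then have lb6: "7/5 \<le> x" by simp
                show ?thesis
                proof (cases "x \<le> 141/100")
                  case True then show ?thesis using iv7[of x] assms lb6 by simp
                next
                  case False
                  then have lb7: "141/100 \<le> x" by simp
                  show ?thesis
                  proof (cases "x \<le> 71/50")
                    case True then show ?thesis using iv8[of x] assms lb7 by simp
                  next
                    case False
                    then have lb8: "71/50 \<le> x" by simp
                    show ?thesis
                    proof (cases "x \<le> 143/100")
                      case True then show ?thesis using iv9[of x] assms lb8 by simp
                    next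
                      case False
                      then have lb9: "143/100 \<le> x" by simp
                      show ?thesis
                      proof (cases "x \<le> 1439/1000")
                        case True then show ?thesis using iv10[of x] assms lb9 by simp
                      next
                        case False
                        then have lb10: "1439/1000 \<le> x" by simp
                        show ?thesis using iv11[of x] assms lb10 by simp
                      qed
                    qed
                  qed
                qed
              qed
            qed
          qed
        qed
      qed
    qed
  qed
qed


lemma U3_core: fixes x :: real assumes x: "144/100 \<le> x" "x < pi/2"
  shows "2 * (pi/2) powr (9/10) * (sin x / x) powr (9/10) - cos x powr (9/10) < 2"
proof -
  define K where "K = (pi/2) powr (9/10)"
  have K0: "0 < K" by (simp add: K_def)
  have K10: "K^10 = (pi/2)^9" unfolding K_def by (simp add: powr_power)
  have "(pi/2)^9 \<le> (11/7::real)^9" using pi_ub by (intro power_mono) auto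
  then have aK: "(2*K)^10 \<le> 60000" using K10 by (simp add: power_mult_distrib power_divide)
  define H where "H = (\<lambda>t. (2*K) * (sin t / t) powr (9/10) - cos t powr (9/10))"
  have "H x < H (pi/2)"
  proof (rule DERIV_pos_imp_increasing_open[OF x(2)])
    fix t assume t: "x < t" "t < pi/2"
    then have t0: "0 < t" "t < pi/2" and t1: "144/100 \<le> t" using x by auto
    have e: "(9/10::real) - 1 = -1 / real (10::nat)" by simp
    note tp = trig_pos[OF t0]
    have D0: "0 < sin t - t * cos t" using D_pos[OF t0] .
    have "(2*K)^10 * (sin t - t * cos t)^10 * cos t \<le> 60000 * (sin t - t * cos t)^10 * cos t"
      using aK D0 tp by (intro mult_right_mono) auto
    also have "\<dots> < (sin t * t^2)^10 * (sin t / t)" using U3_poly[OF t1 t0(2)] .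
    finally have "0 < cos t powr (-1 / real (10::nat)) * sin t - (2*K) * (sin t / t) powr (-1 / real (10::nat)) * (sin t - t * cos t) / t^2"
      using tp t0 D0 K0 by (subst sign_pos) auto
    then show "\<exists>y. (H has_real_derivative y) (at t) \<and> 0 < y"
      using deriv_g[OF t0, of "2*K" "9/10"] unfolding e H_def by (intro exI conjI) auto
  next
    have c1: "continuous_on {x..pi/2} (\<lambda>t. sin t / t)"
      using x by (intro continuous_intros) auto
    have c2: "continuous_on {x..pi/2} (\<lambda>t. (sin t / t) powr (9/10))"
    proof (rule continuous_on_powr'[OF c1 continuous_on_const])
      show "\<forall>t\<in>{x..pi/2}. 0 \<le> sin t / t \<and> (sin t / t = 0 \<longrightarrow> 0 < (9/10::real))"
        using x pi_lb by (auto intro!: divide_nonneg_nonneg sin_ge_zero)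
    qed
    have c3: "continuous_on {x..pi/2} (\<lambda>t. cos t powr (9/10))"
    proof (rule continuous_on_powr'[OF continuous_on_cos[OF continuous_on_id] continuous_on_const])
      show "\<forall>t\<in>{x..pi/2}. 0 \<le> cos t \<and> (cos t = 0 \<longrightarrow> 0 < (9/10::real))"
        using x pi_lb by (auto intro!: cos_ge_zero)
    qed
    show "continuous_on {x..pi/2} H"
      unfolding H_def by (intro continuous_on_diff continuous_on_mult c2 c3 continuous_on_const)
  qed
  also have "H (pi/2) = 2"
  proof -
    have "(pi/2) powr (9/10) * (2/pi) powr (9/10) = ((pi/2) * (2/pi)) powr (9/10)"
      using powr_mult[of "pi/2" "2/pi" "9/10"] by simp
    also have "\<dots> = 1" by simp
    finally show ?thesis unfolding H_def K_def by simp
  qed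
  finally show ?thesis unfolding H_def K_def by simp
qed


lemma pm_nz: "r \<noteq> 0 \<Longrightarrow> power_mean r 1 c (2/3) = (2/3 + c powr r / 3) powr (1/r)"
  by (simp add: power_mean_def)

lemma pm_zero: "power_mean 0 1 c (2/3) = c powr (1/3)"
  by (simp add: power_mean_def)

lemma young_c: fixes c r :: real assumes "0 < c" shows "(c powr r) powr (1/3) \<le> 2/3 + c powr r / 3"
  using Youngs_inequality_0[of "2/3" "1/3" 1 "c powr r"] assms by simp

lemma pm0_le: assumes c: "0 < c" and r: "0 < r"
  shows "power_mean 0 1 c (2/3) \<le> power_mean r 1 c (2/3)"
proof -
  have "c powr (1/3) = ((c powr r) powr (1/3)) powr (1/r)" using r by (simp add: powr_powr)
  also have "\<dots> \<le> (2/3 + c powr r / 3) powr (1/r)"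
    using young_c[OF c, of r] r by (intro powr_mono2) auto
  finally show ?thesis using r by (simp add: pm_zero pm_nz)
qed

lemma pm_le0: assumes c: "0 < c" and r: "r < 0"
  shows "power_mean r 1 c (2/3) \<le> power_mean 0 1 c (2/3)"
proof -
  have "(2/3 + c powr r / 3) powr (1/r) \<le> ((c powr r) powr (1/3)) powr (1/r)"
    using young_c[OF c, of r] r c by (intro powr_mono2') (auto simp: divide_nonpos_neg)
  also have "\<dots> = c powr (1/3)" using r by (simp add: powr_powr)
  finally show ?thesis using r by (simp add: pm_zero pm_nz)
qed

lemma pm_pos_mono: assumes c: "0 < c" and r: "0 < r1" "r1 \<le> r2"
  shows "power_mean r1 1 c (2/3) \<le> power_mean r2 1 c (2/3)"
proof -
  define e where "e = r2 / r1"
  have e1: "1 \<le> e" using r by (simp add: e_def)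
  define B1 where "B1 = 2/3 + c powr r1 / 3"
  have B1: "0 < B1" by (simp add: B1_def add_pos_nonneg)
  have "B1 powr e \<le> (1 - 1/3) * 1 powr e + (1/3) * (c powr r1) powr e"
    using convex_onD[OF powr_convex[OF e1], of "1/3" 1 "c powr r1"] c
    by (simp add: B1_def algebra_simps)
  also have "\<dots> = 2/3 + c powr r2 / 3" using r by (simp add: powr_powr e_def)
  finally have Bl: "B1 powr e \<le> 2/3 + c powr r2 / 3" .
  have "B1 powr (1/r1) = (B1 powr e) powr (1/r2)" using r by (simp add: powr_powr e_def)
  also have "\<dots> \<le> (2/3 + c powr r2 / 3) powr (1/r2)"
    using Bl r B1 by (intro powr_mono2) auto
  finally show ?thesis using r by (simp add: pm_nz B1_def)
qed

lemma pm_mono: assumes c: "0 < c" and r: "r1 \<le> r2" "0 < r2"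
  shows "power_mean r1 1 c (2/3) \<le> power_mean r2 1 c (2/3)"
proof (cases "0 < r1")
  case True then show ?thesis using pm_pos_mono c r by blast
next
  case False
  then have "power_mean r1 1 c (2/3) \<le> power_mean 0 1 c (2/3)"
    using pm_le0[OF c, of r1] by (cases "r1 = 0") auto
  also have "\<dots> \<le> power_mean r2 1 c (2/3)" using pm0_le[OF c r(2)] .
  finally show ?thesis .
qed

lemma lnpi2: "0 < ln pi - ln 2"
  using pi_lb by simp

lemma p_lb: "8/9 \<le> (ln 3 - ln 2) / (ln pi - ln 2)"
proof -
  have "(pi/2)^8 \<le> (11/7::real)^8" using pi_ub by (intro power_mono) auto
  also have "\<dots> \<le> (3/2)^9" by (simp add: power_divide)
  finally have "ln ((pi/2)^8) \<le> ln ((3/2::real)^9)" by simp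
  then have "8 * (ln pi - ln 2) \<le> 9 * (ln 3 - ln 2)" by (simp add: ln_realpow ln_div)
  then show ?thesis using lnpi2 by (simp add: le_divide_eq)
qed

lemma p_ub: "(ln 3 - ln 2) / (ln pi - ln 2) \<le> 9/10"
proof -
  have "(3/2::real)^10 \<le> (157/100)^9" by (simp add: power_divide)
  also have "\<dots> \<le> (pi/2)^9" using pi_lb by (intro power_mono) auto
  finally have "ln ((3/2::real)^10) \<le> ln ((pi/2)^9)" by simp
  then have "10 * (ln 3 - ln 2) \<le> 9 * (ln pi - ln 2)" by (simp add: ln_realpow ln_div)
  then show ?thesis using lnpi2 by (simp add: divide_le_eq)
qed

lemma p_pos: "0 < (ln 3 - ln 2) / (ln pi - ln 2)"
  using p_lb by linarith

lemma p_pow: "(2/3) powr (1 / ((ln 3 - ln 2) / (ln pi - ln 2))) = 2/pi"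
proof -
  have l32: "0 < ln 3 - ln (2::real)" by simp
  have "(2/3::real) powr (1 / ((ln 3 - ln 2) / (ln pi - ln 2))) = exp ((ln pi - ln 2) / (ln 3 - ln 2) * ln (2/3))"
    by (simp add: powr_def)
  also have "(ln pi - ln 2) / (ln 3 - ln 2) * ln (2/3::real) = ln 2 - ln pi"
    using l32 by (simp add: ln_div field_simps)
  also have "exp (ln 2 - ln pi) = 2 / pi" by (simp add: exp_diff)
  finally show ?thesis .
qed

lemma lower_ineq: assumes x: "0 < x" "x < pi/2"
  shows "power_mean (4/5) 1 (cos x) (2/3) < sin x / x"
proof -
  note tp = trig_pos[OF x]
  have "2/3 + cos x powr (4/5) / 3 < (sin x / x) powr (4/5)" using L_core[OF x] by simp
  then have "(2/3 + cos x powr (4/5) / 3) powr (5/4) < ((sin x / x) powr (4/5)) powr (5/4)"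
    by (intro powr_less_mono2) auto
  also have "\<dots> = sin x / x" using tp x by (simp add: powr_powr)
  finally show ?thesis by (simp add: pm_nz)
qed

lemma upper_ineq: assumes x: "0 < x" "x < pi/2"
  shows "sin x / x < power_mean ((ln 3 - ln 2) / (ln pi - ln 2)) 1 (cos x) (2/3)"
proof -
  define p where "p = (ln 3 - ln 2) / (ln pi - ln 2)"
  have p: "8/9 \<le> p" "p \<le> 9/10" "0 < p" using p_lb p_ub p_pos by (auto simp: p_def)
  note tp = trig_pos[OF x]
  show ?thesis
  proof (cases "x \<le> 144/100")
    case True
    have "3 * (sin x / x) powr (8/9) - cos x powr (8/9) < 2"
      using U1_core[of x] U2_aux[of x] True x by (cases "x \<le> 133/100") auto
    then have "(sin x / x) powr (8/9) < 2/3 + cos x powr (8/9) / 3" by simp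
    then have "((sin x / x) powr (8/9)) powr (9/8) < (2/3 + cos x powr (8/9) / 3) powr (9/8)"
      by (intro powr_less_mono2) auto
    moreover have "((sin x / x) powr (8/9)) powr (9/8) = sin x / x" using tp x by (simp add: powr_powr)
    ultimately have "sin x / x < power_mean (8/9) 1 (cos x) (2/3)" by (simp add: pm_nz)
    also have "\<dots> \<le> power_mean p 1 (cos x) (2/3)" using tp p by (intro pm_mono) auto
    finally show ?thesis by (simp add: p_def)
  next
    case False
    then have x1: "144/100 \<le> x" by simp
    define K where "K = (pi/2) powr (9/10)"
    have "2 * K * (sin x / x) powr (9/10) - cos x powr (9/10) < 2"
      using U3_core[OF x1 x(2)] by (simp add: K_def)
    then have "K * (sin x / x) powr (9/10) < 1 + cos x powr (9/10) / 2" by simp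
    moreover have "K * (sin x / x) powr (9/10) = (pi/2 * (sin x / x)) powr (9/10)"
      unfolding K_def by (subst powr_mult) (use tp in auto)
    ultimately have "(pi/2 * (sin x / x)) powr (9/10) < 1 + cos x powr (9/10) / 2" by simp
    then have "((pi/2 * (sin x / x)) powr (9/10)) powr (10/9) < (1 + cos x powr (9/10) / 2) powr (10/9)"
      by (intro powr_less_mono2) auto
    moreover have "((pi/2 * (sin x / x)) powr (9/10)) powr (10/9) = pi/2 * (sin x / x)"
      using tp x by (simp add: powr_powr)
    ultimately have 1: "pi/2 * (sin x / x) < (1 + cos x powr (9/10) / 2) powr (10/9)" by simp
    have "cos x powr (9/10) \<le> cos x powr p" using tp p by (intro powr_mono') auto
    then have "(1 + cos x powr (9/10) / 2) powr (10/9) \<le> (1 + cos x powr p / 2) powr (10/9)"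
      by (intro powr_mono2) auto
    also have "\<dots> \<le> (1 + cos x powr p / 2) powr (1/p)"
      using p by (intro powr_mono) (auto simp: field_simps)
    finally have 2: "pi/2 * (sin x / x) < (1 + cos x powr p / 2) powr (1/p)" using 1 by simp
    have "sin x / x < 2/pi * (1 + cos x powr p / 2) powr (1/p)"
      using 2 pi_gt_zero by (simp add: field_simps)
    also have "2/pi = (2/3) powr (1/p)" using p_pow by (simp add: p_def)
    also have "(2/3) powr (1/p) * (1 + cos x powr p / 2) powr (1/p) = (2/3 * (1 + cos x powr p / 2)) powr (1/p)"
      by (subst powr_mult) auto
    also have "2/3 * (1 + cos x powr p / 2) = 2/3 + cos x powr p / 3" by simp
    finally have fin: "sin x / x < (2/3 + cos x powr p / 3) powr (1/p)" .
    have eq: "power_mean p 1 (cos x) (2/3) = (2/3 + cos x powr p / 3) powr (1/p)"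
      using p by (intro pm_nz) auto
    have "sin x / x < power_mean p 1 (cos x) (2/3)" using fin eq by simp
    then show ?thesis by (simp only: p_def)
  qed
qed


lemma NA_lim: fixes r :: real assumes "0 < r"
  shows "((\<lambda>x. ((2/3 + cos x powr r / 3) powr (1/r) - sin x / x) / x^4) \<longlongrightarrow> (r - 4/5)/36) (at_right 0)"
  using assms by (real_asymp simp: field_simps)

lemma NA: fixes r :: real assumes r: "4/5 < r"
  shows "\<exists>x\<in>{0<..<pi/2}. sin x / x \<le> power_mean r 1 (cos x) (2/3)"
proof -
  have r0: "0 < r" using r by simp
  have "eventually (\<lambda>x. 0 < ((2/3 + cos x powr r / 3) powr (1/r) - sin x / x) / x^4) (at_right 0)"
    using NA_lim[OF r0] r by (intro order_tendstoD(1)) auto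
  moreover have "eventually (\<lambda>x. 0 < x \<and> x < pi/2) (at_right (0::real))"
    by (rule ev_small) simp
  ultimately have "eventually (\<lambda>x. (0 < x \<and> x < pi/2) \<and> 0 < ((2/3 + cos x powr r / 3) powr (1/r) - sin x / x) / x^4) (at_right (0::real))"
    by eventually_elim auto
  then have "\<exists>x. (0 < x \<and> x < pi/2) \<and> 0 < ((2/3 + cos x powr r / 3) powr (1/r) - sin x / x) / x^4"
    by (rule eventually_happens'[rotated]) simp
  then obtain x where x: "0 < x" "x < pi/2" and pos: "0 < ((2/3 + cos x powr r / 3) powr (1/r) - sin x / x) / x^4"
    by blast
  have "sin x / x < (2/3 + cos x powr r / 3) powr (1/r)"
    using pos x by (simp add: zero_less_divide_iff)
  then have "sin x / x \<le> power_mean r 1 (cos x) (2/3)" using r0 by (simp add: pm_nz)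
  moreover have "x \<in> {0<..<pi/2}" using x by simp
  ultimately show ?thesis by blast
qed

lemma NB: fixes b :: real assumes b: "0 < b" "b < (ln 3 - ln 2) / (ln pi - ln 2)"
  shows "\<exists>x\<in>{0<..<pi/2}. power_mean b 1 (cos x) (2/3) \<le> sin x / x"
proof (rule ccontr)
  assume "\<not> ?thesis"
  then have H: "\<And>x. 0 < x \<Longrightarrow> x < pi/2 \<Longrightarrow> sin x / x < (2/3 + cos x powr b / 3) powr (1/b)"
    using b by (auto simp: pm_nz not_le)
  define F where "F = at_left (pi/2::real)"
  have Fnb: "F \<noteq> bot" unfolding F_def by simp
  have l1: "((\<lambda>x. sin x / x) \<longlongrightarrow> sin (pi/2) / (pi/2)) F"
    unfolding F_def by (intro tendsto_intros) auto
  have l0: "((\<lambda>x. cos x) \<longlongrightarrow> cos (pi/2)) F"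
    unfolding F_def by (intro tendsto_intros)
  have evc: "eventually (\<lambda>x. 0 < x \<and> x < pi/2) F"
    unfolding F_def eventually_at_left_field by (intro exI[of _ 0]) auto
  have "eventually (\<lambda>x. 0 \<le> cos x) F"
    using evc by eventually_elim (auto intro: cos_ge_zero)
  then have l2: "((\<lambda>x. cos x powr b) \<longlongrightarrow> 0) F"
    using l0 b by (intro tendsto_zero_powrI[of _ _ "\<lambda>_. b" b]) auto
  have l3: "((\<lambda>x. (2/3 + cos x powr b / 3) powr (1/b)) \<longlongrightarrow> (2/3 + 0/3) powr (1/b)) F"
    by (intro tendsto_powr tendsto_intros l2) auto
  have "2/pi \<le> (2/3) powr (1/b)"
  proof -
    have ev: "eventually (\<lambda>x. sin x / x \<le> (2/3 + cos x powr b / 3) powr (1/b)) F"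
      using evc
    proof eventually_elim
      case (elim x) then show ?case using H[of x] by simp
    qed
    have "sin (pi/2) / (pi/2) \<le> (2/3 + 0/3) powr (1/b)"
      by (rule tendsto_le[OF Fnb l3 l1 ev])
    then show ?thesis by simp
  qed
  moreover have "(2/3::real) powr (1/b) < (2/3) powr (1 / ((ln 3 - ln 2) / (ln pi - ln 2)))"
  proof (rule powr_less_mono')
    show "1 / ((ln 3 - ln 2) / (ln pi - ln 2)) < 1 / b"
    proof (rule divide_strict_left_mono)
      show "0 < (ln 3 - ln 2) / (ln pi - ln 2) * b" using lnpi2 b by (intro mult_pos_pos divide_pos_pos) auto
    qed (use b in auto)
  qed auto
  ultimately show False using p_pow by simp
qed

theorem corollary4p2:
  fixes \<alpha> \<beta> :: real
  shows "(\<forall>x\<in>{0<..<pi/2}.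
            power_mean \<alpha> 1 (cos x) (2/3) < sin x / x \<and>
            sin x / x < power_mean \<beta> 1 (cos x) (2/3))
         \<longleftrightarrow> (\<alpha> \<le> 4/5 \<and> \<beta> \<ge> (ln 3 - ln 2) / (ln pi - ln 2))"
proof
  assume H: "\<forall>x\<in>{0<..<pi/2}. power_mean \<alpha> 1 (cos x) (2/3) < sin x / x \<and> sin x / x < power_mean \<beta> 1 (cos x) (2/3)"
  show "\<alpha> \<le> 4/5 \<and> \<beta> \<ge> (ln 3 - ln 2) / (ln pi - ln 2)"
  proof
    show "\<alpha> \<le> 4/5"
    proof (rule ccontr)
      assume "\<not> \<alpha> \<le> 4/5"
      then have a: "4/5 < min \<alpha> 1" "min \<alpha> 1 \<le> \<alpha>" "0 < \<alpha>" by auto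
      obtain x where x: "x \<in> {0<..<pi/2}" and le: "sin x / x \<le> power_mean (min \<alpha> 1) 1 (cos x) (2/3)"
        using NA[OF a(1)] by blast
      have c: "0 < cos x" using x trig_pos[of x] by auto
      have m: "power_mean (min \<alpha> 1) 1 (cos x) (2/3) \<le> power_mean \<alpha> 1 (cos x) (2/3)"
        using pm_mono[OF c a(2) a(3)] .
      have "power_mean \<alpha> 1 (cos x) (2/3) < sin x / x" using H x by blast
      then show False using m le by linarith
    qed
  next
    show "\<beta> \<ge> (ln 3 - ln 2) / (ln pi - ln 2)"
    proof (rule ccontr)
      define p where "p = (ln 3 - ln 2) / (ln pi - ln 2)"
      have p0: "0 < p" using p_pos by (simp add: p_def)
      assume "\<not> \<beta> \<ge> (ln 3 - ln 2) / (ln pi - ln 2)"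
      then have bp: "\<beta> < p" by (simp add: p_def)
      have b: "0 < max \<beta> (p/2)" "max \<beta> (p/2) < p" "\<beta> \<le> max \<beta> (p/2)" using p0 bp by auto
      obtain x where x: "x \<in> {0<..<pi/2}" and le: "power_mean (max \<beta> (p/2)) 1 (cos x) (2/3) \<le> sin x / x"
        using NB[OF b(1)] b(2) unfolding p_def by blast
      have c: "0 < cos x" using x trig_pos[of x] by auto
      have m: "power_mean \<beta> 1 (cos x) (2/3) \<le> power_mean (max \<beta> (p/2)) 1 (cos x) (2/3)"
        using pm_mono[OF c b(3) b(1)] .
      have "sin x / x < power_mean \<beta> 1 (cos x) (2/3)" using H x by blast
      then show False using m le by linarith
    qed
  qed
next
  assume A: "\<alpha> \<le> 4/5 \<and> \<beta> \<ge> (ln 3 - ln 2) / (ln pi - ln 2)"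
  show "\<forall>x\<in>{0<..<pi/2}. power_mean \<alpha> 1 (cos x) (2/3) < sin x / x \<and> sin x / x < power_mean \<beta> 1 (cos x) (2/3)"
  proof
    fix x assume "x \<in> {0<..<pi/2::real}"
    then have x: "0 < x" "x < pi/2" by auto
    have c: "0 < cos x" using trig_pos[OF x] by simp
    have "power_mean \<alpha> 1 (cos x) (2/3) \<le> power_mean (4/5) 1 (cos x) (2/3)"
      using A by (intro pm_mono[OF c]) auto
    also have "\<dots> < sin x / x" using lower_ineq[OF x] .
    finally have 1: "power_mean \<alpha> 1 (cos x) (2/3) < sin x / x" .
    have "sin x / x < power_mean ((ln 3 - ln 2) / (ln pi - ln 2)) 1 (cos x) (2/3)" using upper_ineq[OF x] .
    also have "\<dots> \<le> power_mean \<beta> 1 (cos x) (2/3)"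
      using A p_pos by (intro pm_mono[OF c]) auto
    finally show "power_mean \<alpha> 1 (cos x) (2/3) < sin x / x \<and> sin x / x < power_mean \<beta> 1 (cos x) (2/3)"
      using 1 by simp
  qed
qed


end
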